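(* Let $M$ be a non-reduced $n\times n$ matrix with natural number entries. Then there is a reduced submatrix $N$ of $M$ such that $\mathrm{Cat}(M)\neq\emptyset$ if and only if $\mathrm{Cat}(N)\neq\emptyset$.
   Context: For an $n\times n$ matrix $M=(m_{ij})$ with entries in the natural numbers, $\mathrm{Cat}(M)$ denotes the collection of categories $A$ with exactly $n$ distinct objects $x_1,\dots,x_n$ such that $|A(x_i,x_j)|=m_{ij}$ for all $i,j$, where $A(x_i,x_j)$ is the set of morphisms from $x_i$ to $x_j$. A matrix $M$ is called non-reduced if there exist $i\neq j$ such that $M_{ki}=M_{kj}$ and $M_{ik}=M_{jk}$ for all $k$ (i.e. row $i$ equals row $j$ and column $i$ equals column $j$); it is called reduced otherwise. A submatrix of $M$ means the matrix obtained by keeping the same subset of indices for rows and for columns, i.e. $(M_{st})_{s,t\in S}$ for some subset $S\subseteq\{1,\dots,n\}$. *)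

theory Defs
  imports Main
begin

text \<open>An n x n matrix with natural number entries is a function M :: nat => nat => nat,
  of which only the entries M i j with i, j < n matter. Objects of a category in Cat(M)
  are named 0, ..., n-1 (so x_i is object i), and the hom-set A(i,j) is identified with
  {0..<M i j} (any set of that cardinality can be relabelled).  A category structure is
  given by identities idm i and compositions cmp i j k g f (= g o f : i -> k for
  f : i -> j, g : j -> k).\<close>

definition is_cat_struct ::
  "nat \<Rightarrow> (nat \<Rightarrow> nat \<Rightarrow> nat) \<Rightarrow> (nat \<Rightarrow> nat)
     \<Rightarrow> (nat \<Rightarrow> nat \<Rightarrow> nat \<Rightarrow> nat \<Rightarrow> nat \<Rightarrow> nat) \<Rightarrow> bool" where
  "is_cat_struct n M idm cmp \<longleftrightarrow>
     (\<forall>i<n. idm i < M i i) \<and>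
     (\<forall>i<n. \<forall>j<n. \<forall>k<n. \<forall>f<M i j. \<forall>g<M j k. cmp i j k g f < M i k) \<and>
     (\<forall>i<n. \<forall>j<n. \<forall>f<M i j. cmp i j j (idm j) f = f \<and> cmp i i j f (idm i) = f) \<and>
     (\<forall>i<n. \<forall>j<n. \<forall>k<n. \<forall>l<n. \<forall>f<M i j. \<forall>g<M j k. \<forall>h<M k l.
        cmp i k l h (cmp i j k g f) = cmp i j l (cmp j k l h g) f)"

definition Cat_nonempty :: "nat \<Rightarrow> (nat \<Rightarrow> nat \<Rightarrow> nat) \<Rightarrow> bool" where
  "Cat_nonempty n M \<longleftrightarrow> (\<exists>idm cmp. is_cat_struct n M idm cmp)"

definition non_reduced :: "nat \<Rightarrow> (nat \<Rightarrow> nat \<Rightarrow> nat) \<Rightarrow> bool" where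
  "non_reduced n M \<longleftrightarrow>
     (\<exists>i<n. \<exists>j<n. i \<noteq> j \<and> (\<forall>k<n. M k i = M k j \<and> M i k = M j k))"

definition reduced :: "nat \<Rightarrow> (nat \<Rightarrow> nat \<Rightarrow> nat) \<Rightarrow> bool" where
  "reduced n M \<longleftrightarrow> \<not> non_reduced n M"

definition is_submatrix ::
  "nat \<Rightarrow> (nat \<Rightarrow> nat \<Rightarrow> nat) \<Rightarrow> nat \<Rightarrow> (nat \<Rightarrow> nat \<Rightarrow> nat) \<Rightarrow> bool" where
  "is_submatrix k N n M \<longleftrightarrow>
     (\<exists>f. strict_mono_on {0..<k} f \<and> f ` {0..<k} \<subseteq> {0..<n} \<and>
          (\<forall>i<k. \<forall>j<k. N i j = M (f i) (f j)))"

end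

theory Submission
  imports Defs
begin

lemma cat_transfer:
  assumes g: "\<forall>a<n. g a < k" and e: "\<forall>a<n. \<forall>b<n. M a b = N (g a) (g b)"
    and c: "Cat_nonempty k N"
  shows "Cat_nonempty n M"
proof -
  obtain idm cmp where s: "is_cat_struct k N idm cmp" using c Cat_nonempty_def by blast
  have "is_cat_struct n M (\<lambda>a. idm (g a)) (\<lambda>a b c. cmp (g a) (g b) (g c))"
    unfolding is_cat_struct_def
  proof (intro conjI allI impI)
    fix i assume i: "i < n"
    show "idm (g i) < M i i" using s g e i unfolding is_cat_struct_def by simp
  next
    fix i j l f h assume a: "i < n" "j < n" "l < n" "f < M i j" "h < M j l"
    show "cmp (g i) (g j) (g l) h f < M i l"
      using s g e a unfolding is_cat_struct_def by simp
  next
    fix i j f assume a: "i < n" "j < n" "f < M i j"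
    show "cmp (g i) (g j) (g j) (idm (g j)) f = f"
      using s g e a unfolding is_cat_struct_def by simp
  next
    fix i j f assume a: "i < n" "j < n" "f < M i j"
    show "cmp (g i) (g i) (g j) f (idm (g i)) = f"
      using s g e a unfolding is_cat_struct_def by simp
  next
    fix i j l m f h u assume a: "i < n" "j < n" "l < n" "m < n" "f < M i j" "h < M j l" "u < M l m"
    show "cmp (g i) (g l) (g m) u (cmp (g i) (g j) (g l) h f) =
          cmp (g i) (g j) (g m) (cmp (g j) (g l) (g m) u h) f"
      using s g e a unfolding is_cat_struct_def by simp
  qed
  thus ?thesis unfolding Cat_nonempty_def by blast
qed

theorem mainTheorem7:
  fixes n :: nat and M :: "nat \<Rightarrow> nat \<Rightarrow> nat"
  assumes "non_reduced n M"
  shows "\<exists>k N. 1 \<le> k \<and> is_submatrix k N n M \<and> reduced k N \<and>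
            (Cat_nonempty n M \<longleftrightarrow> Cat_nonempty k N)"
proof -
  define eqv where "eqv c a \<longleftrightarrow> (\<forall>l<n. M l c = M l a \<and> M c l = M a l)" for c a
  define r where "r a = (LEAST b. eqv b a)" for a
  define S where "S = {a. a < n \<and> (\<forall>b<a. \<not> eqv a b)}"
  define xs where "xs = sorted_list_of_set S"
  define k where "k = length xs"
  define f where "f i = xs ! i" for i
  define g where "g a = (LEAST i. xs ! i = r a)" for a
  define N where "N i j = M (f i) (f j)" for i j
  have n0: "0 < n" using assms unfolding non_reduced_def by auto
  have finS: "finite S" unfolding S_def by auto
  have setxs: "set xs = S" using finS xs_def by simp
  have sxs: "sorted_wrt (<) xs" using xs_def by simp
  have eqv_refl: "eqv a a" for a unfolding eqv_def by simp
  have eqv_sym: "eqv a b \<Longrightarrow> eqv b a" for a b unfolding eqv_def by simp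
  have eqv_trans: "eqv a b \<Longrightarrow> eqv b c \<Longrightarrow> eqv a c" for a b c unfolding eqv_def by simp
  have r_le: "r a \<le> a" for a unfolding r_def by (rule Least_le) (rule eqv_refl)
  have r_eqv: "eqv (r a) a" for a unfolding r_def by (rule LeastI) (rule eqv_refl)
  have rS: "r a \<in> S" if "a < n" for a
  proof -
    have "\<not> eqv (r a) b" if "b < r a" for b
    proof
      assume "eqv (r a) b"
      hence "eqv b a" using eqv_sym eqv_trans r_eqv by blast
      hence "r a \<le> b" unfolding r_def by (rule Least_le)
      thus False using that by simp
    qed
    thus ?thesis unfolding S_def using r_le[of a] \<open>a < n\<close> by auto
  qed
  have fg: "f (g a) = r a \<and> g a < k" if "a < n" for a
  proof -
    have "\<exists>i. i < k \<and> xs ! i = r a" using rS[OF that] setxs k_def by (metis in_set_conv_nth)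
    then obtain i where i: "i < k" "xs ! i = r a" by blast
    have "xs ! g a = r a" unfolding g_def by (rule LeastI[of _ i]) (rule i(2))
    moreover have "g a \<le> i" unfolding g_def by (rule Least_le) (rule i(2))
    ultimately show ?thesis using i f_def by simp
  qed
  have Mr: "M a b = M (r a) (r b)" if "a < n" "b < n" for a b
  proof -
    have "r a < n" "r b < n" using rS that S_def by auto
    have "M a b = M (r a) b" using r_eqv[of a] that unfolding eqv_def by simp
    also have "\<dots> = M (r a) (r b)" using r_eqv[of b] \<open>r a < n\<close> unfolding eqv_def by simp
    finally show ?thesis .
  qed
  have rfix: "r x = x" if "x \<in> S" for x
  proof (rule ccontr)
    assume "r x \<noteq> x"
    hence "r x < x" using r_le[of x] by simp
    moreover have "eqv x (r x)" using r_eqv eqv_sym by blast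
    ultimately show False using that S_def by auto
  qed
  have fS: "f i \<in> S" if "i < k" for i
  proof -
    have "xs ! i \<in> set xs" using that k_def by simp
    thus ?thesis using setxs f_def by simp
  qed
  have fn: "f i < n" if "i < k" for i using fS[OF that] S_def by auto
  have smono: "strict_mono_on {0..<k} f"
    unfolding strict_mono_on_def f_def k_def using sxs sorted_wrt_nth_less by fastforce
  have sub: "is_submatrix k N n M"
    unfolding is_submatrix_def using smono fn N_def by auto
  have k1: "1 \<le> k"
  proof -
    have "0 \<in> S" using n0 S_def by auto
    hence "xs \<noteq> []" using setxs by auto
    thus ?thesis using k_def by (cases xs) auto
  qed
  have red: "reduced k N"
    unfolding reduced_def non_reduced_def N_def
  proof clarify
    fix i j assume ij: "i < k" "j < k" "i \<noteq> j"
      and H: "\<forall>l<k. M (f l) (f i) = M (f l) (f j) \<and> M (f i) (f l) = M (f j) (f l)"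
    have fij: "f i \<noteq> f j" using smono ij unfolding strict_mono_on_def
      by (metis atLeastLessThan_iff less_irrefl linorder_neqE_nat zero_le)
    have "eqv (f i) (f j)" unfolding eqv_def
    proof (intro allI impI conjI)
      fix l assume l: "l < n"
      have ri: "r (f i) = f i" "r (f j) = f j" using rfix fS ij by auto
      have a: "M l (f i) = M (f (g l)) (f i)" using Mr[of l "f i"] l fn ij ri fg[OF l] by simp
      have b: "M l (f j) = M (f (g l)) (f j)" using Mr[of l "f j"] l fn ij ri fg[OF l] by simp
      show "M l (f i) = M l (f j)" using a b H[rule_format, of "g l"] fg[OF l] by simp
      have a2: "M (f i) l = M (f i) (f (g l))" using Mr[of "f i" l] l fn ij ri fg[OF l] by simp
      have b2: "M (f j) l = M (f j) (f (g l))" using Mr[of "f j" l] l fn ij ri fg[OF l] by simp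
      show "M (f i) l = M (f j) l" using a2 b2 H[rule_format, of "g l"] fg[OF l] by simp
    qed
    moreover have "f i \<in> S" "f j \<in> S" using fS ij by auto
    ultimately show False using fij eqv_sym unfolding S_def
      by (metis (no_types, lifting) linorder_neqE_nat mem_Collect_eq)
  qed
  have c1: "Cat_nonempty n M \<Longrightarrow> Cat_nonempty k N"
    by (rule cat_transfer[of k f n]) (use fn N_def in auto)
  have c2: "Cat_nonempty k N \<Longrightarrow> Cat_nonempty n M"
    by (rule cat_transfer[of n g k]) (use fg Mr N_def in auto)
  show ?thesis using k1 sub red c1 c2 by blast
qed

end
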